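(* Let $(A,\cdot,\circ)$ be a skew brace and let $B$, $C$ be sub-skew braces of $A$. (a) If $A = B\cdot C$ and $B$ is a left ideal in $A$ or in $A^{\mathrm{op}}$, then $A = B\circ C$. (b) If $A = B\circ C$ and $B$ is a right ideal in $A$ or in $A^{\mathrm{op}}$, then $A = B\cdot C$.
   Context: A skew brace is a set $A$ with two group operations $\cdot$ (often written by juxtaposition) and $\circ$ such that $a\circ(bc) = (a\circ b)\,a^{-1}\,(a\circ c)$ for all $a,b,c\in A$. $a^{-1}$ denotes the inverse in $(A,\cdot)$. Define $a*b = a^{-1}(a\circ b)b^{-1}$, $\lambda_a(b)=a^{-1}(a\circ b)$, $\lambda^{\mathrm{op}}_a(b)=(a\circ b)a^{-1}$. A sub-skew brace is a subset that is a subgroup of both $(A,\cdot)$ and $(A,\circ)$. $A=B\cdot C$ means every element is $bc$ with $b\in B,c\in C$; $A=B\circ C$ similarly. A subgroup $I$ of $(A,\cdot)$ is a left ideal in $A$ iff $\lambda_a(x)\in I$ for all $a\in A,x\in I$, and a right ideal in $A$ iff $\lambda_x(a)a^{-1}\in I$ for all $x\in I,a\in A$. The opposite skew brace $A^{\mathrm{op}}$ is $A$ with $a\cdot^{\mathrm{op}}b=ba$ and the same $\circ$; $I$ is a left ideal in $A^{\mathrm{op}}$ iff $\lambda^{\mathrm{op}}_a(x)\in I$ for all $a\in A,x\in I$, and a right ideal in $A^{\mathrm{op}}$ iff $a^{-1}\lambda^{\mathrm{op}}_x(a)\in I$ for all $x\in I,a\in A$. *)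

theory Defs
  imports "HOL-Algebra.Group"
begin

definition dot_grp :: "'a set \<Rightarrow> ('a \<Rightarrow> 'a \<Rightarrow> 'a) \<Rightarrow> 'a \<Rightarrow> 'a monoid" where
  "dot_grp A f e = \<lparr>carrier = A, mult = f, one = e\<rparr>"

definition skew_brace ::
  "'a set \<Rightarrow> ('a \<Rightarrow> 'a \<Rightarrow> 'a) \<Rightarrow> 'a \<Rightarrow> ('a \<Rightarrow> 'a \<Rightarrow> 'a) \<Rightarrow> 'a \<Rightarrow> bool" where
  "skew_brace A dt e1 cr e2 \<longleftrightarrow>
     group (dot_grp A dt e1) \<and> group (dot_grp A cr e2) \<and>
     (\<forall>a\<in>A. \<forall>b\<in>A. \<forall>c\<in>A.
        cr a (dt b c) = dt (dt (cr a b) (inv\<^bsub>dot_grp A dt e1\<^esub> a)) (cr a c))"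

definition sub_skew_brace ::
  "'a set \<Rightarrow> 'a set \<Rightarrow> ('a \<Rightarrow> 'a \<Rightarrow> 'a) \<Rightarrow> 'a \<Rightarrow> ('a \<Rightarrow> 'a \<Rightarrow> 'a) \<Rightarrow> 'a \<Rightarrow> bool" where
  "sub_skew_brace B A dt e1 cr e2 \<longleftrightarrow>
     subgroup B (dot_grp A dt e1) \<and> subgroup B (dot_grp A cr e2)"

definition lam :: "'a set \<Rightarrow> ('a \<Rightarrow> 'a \<Rightarrow> 'a) \<Rightarrow> 'a \<Rightarrow> ('a \<Rightarrow> 'a \<Rightarrow> 'a) \<Rightarrow> 'a \<Rightarrow> 'a \<Rightarrow> 'a" where
  "lam A dt e1 cr a b = dt (inv\<^bsub>dot_grp A dt e1\<^esub> a) (cr a b)"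

definition lam_op :: "'a set \<Rightarrow> ('a \<Rightarrow> 'a \<Rightarrow> 'a) \<Rightarrow> 'a \<Rightarrow> ('a \<Rightarrow> 'a \<Rightarrow> 'a) \<Rightarrow> 'a \<Rightarrow> 'a \<Rightarrow> 'a" where
  "lam_op A dt e1 cr a b = dt (cr a b) (inv\<^bsub>dot_grp A dt e1\<^esub> a)"

definition left_ideal where
  "left_ideal I A dt e1 cr \<longleftrightarrow> subgroup I (dot_grp A dt e1) \<and>
     (\<forall>a\<in>A. \<forall>x\<in>I. lam A dt e1 cr a x \<in> I)"

definition right_ideal where
  "right_ideal I A dt e1 cr \<longleftrightarrow> subgroup I (dot_grp A dt e1) \<and>
     (\<forall>x\<in>I. \<forall>a\<in>A. dt (lam A dt e1 cr x a) (inv\<^bsub>dot_grp A dt e1\<^esub> a) \<in> I)"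

definition left_ideal_op where
  "left_ideal_op I A dt e1 cr \<longleftrightarrow> subgroup I (dot_grp A dt e1) \<and>
     (\<forall>a\<in>A. \<forall>x\<in>I. lam_op A dt e1 cr a x \<in> I)"

definition right_ideal_op where
  "right_ideal_op I A dt e1 cr \<longleftrightarrow> subgroup I (dot_grp A dt e1) \<and>
     (\<forall>x\<in>I. \<forall>a\<in>A. dt (inv\<^bsub>dot_grp A dt e1\<^esub> a) (lam_op A dt e1 cr x a) \<in> I)"

definition set_prod :: "('a \<Rightarrow> 'a \<Rightarrow> 'a) \<Rightarrow> 'a set \<Rightarrow> 'a set \<Rightarrow> 'a set" where
  "set_prod f B C = {f b c | b c. b \<in> B \<and> c \<in> C}"

end

theory Submission
  imports Defs
begin

lemma swap_prod:
  assumes G: "group G" and H: "subgroup H G" and K: "subgroup K G"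
    and eq: "carrier G = set_prod (mult G) H K"
  shows "carrier G = set_prod (mult G) K H"
proof
  interpret group G by (rule G)
  show "carrier G \<subseteq> set_prod (mult G) K H"
  proof
    fix x assume x: "x \<in> carrier G"
    hence "inv\<^bsub>G\<^esub> x \<in> set_prod (mult G) H K" using eq by auto
    then obtain h k where hk: "h \<in> H" "k \<in> K" "inv\<^bsub>G\<^esub> x = h \<otimes>\<^bsub>G\<^esub> k" unfolding set_prod_def by auto
    have hc: "h \<in> carrier G" "k \<in> carrier G" using hk H K subgroup.subset by blast+
    have "x = inv\<^bsub>G\<^esub> (h \<otimes>\<^bsub>G\<^esub> k)" using hk(3) x by (metis inv_inv)
    also have "\<dots> = inv\<^bsub>G\<^esub> k \<otimes>\<^bsub>G\<^esub> inv\<^bsub>G\<^esub> h" using hc by (simp add: inv_mult_group)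
    finally show "x \<in> set_prod (mult G) K H" unfolding set_prod_def
      using hk H K subgroup.m_inv_closed by fastforce
  qed
  show "set_prod (mult G) K H \<subseteq> carrier G"
    unfolding set_prod_def using H K subgroup.subset by fastforce
qed

lemma (in group) g1: "x \<in> carrier G \<Longrightarrow> y \<in> carrier G \<Longrightarrow> z \<in> carrier G \<Longrightarrow>
  (x \<otimes> ((inv x \<otimes> y) \<otimes> inv z)) \<otimes> z = y"
  by (simp add: m_assoc) (simp add: m_assoc[symmetric])
lemma (in group) g2: "x \<in> carrier G \<Longrightarrow> y \<in> carrier G \<Longrightarrow> z \<in> carrier G \<Longrightarrow>
  z \<otimes> ((inv z \<otimes> (y \<otimes> inv x)) \<otimes> x) = y"
  by (simp add: m_assoc) (simp add: m_assoc[symmetric])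
lemma (in group) g3: "c \<in> carrier G \<Longrightarrow> b \<in> carrier G \<Longrightarrow> ((c \<otimes> c) \<otimes> inv c) \<otimes> b = c \<otimes> b"
  by (simp add: m_assoc)
lemma (in group) g4: "c \<in> carrier G \<Longrightarrow> b \<in> carrier G \<Longrightarrow> (b \<otimes> inv c) \<otimes> (c \<otimes> c) = b \<otimes> c"
  by (simp add: m_assoc) (simp add: m_assoc[symmetric])

lemma swap_dot:
  assumes "group (dot_grp A f e)" "subgroup H (dot_grp A f e)" "subgroup K (dot_grp A f e)"
    "A = set_prod f H K"
  shows "A = set_prod f K H"
  using swap_prod[OF assms(1-3)] assms(4) by (simp add: dot_grp_def)

locale sb =
  fixes A dt e1 cr e2
  assumes sb: "skew_brace A dt e1 cr e2"
begin

abbreviation "G \<equiv> dot_grp A dt e1"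
abbreviation "H \<equiv> dot_grp A cr e2"

lemma gG: "group G" and gH: "group H"
  and law: "\<And>a b c. a \<in> A \<Longrightarrow> b \<in> A \<Longrightarrow> c \<in> A \<Longrightarrow>
        cr a (dt b c) = dt (dt (cr a b) (inv\<^bsub>G\<^esub> a)) (cr a c)"
  using sb unfolding skew_brace_def by auto

lemma cG[simp]: "carrier G = A" "mult G = dt" "one G = e1"
  and cH[simp]: "carrier H = A" "mult H = cr" "one H = e2"
  by (simp_all add: dot_grp_def)

interpretation g: group G by (rule gG)
interpretation h: group H by (rule gH)

lemma circ_e1: "a \<in> A \<Longrightarrow> cr a e1 = a"
proof -
  assume a: "a \<in> A"
  have e: "e1 \<in> A" using g.one_closed by simp
  have ae: "cr a e1 \<in> A" using h.m_closed[of a e1] a e by simp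
  have "cr a (dt e1 e1) = dt (dt (cr a e1) (inv\<^bsub>G\<^esub> a)) (cr a e1)" using law[OF a e e] .
  hence "cr a e1 = dt (dt (cr a e1) (inv\<^bsub>G\<^esub> a)) (cr a e1)" using g.l_one[of e1] e by simp
  hence "e1 = dt (cr a e1) (inv\<^bsub>G\<^esub> a)"
    using g.r_cancel_one[of "cr a e1" "dt (cr a e1) (inv\<^bsub>G\<^esub> a)"] ae a e
    by (simp add: g.m_closed[simplified] g.inv_closed[simplified])
  thus ?thesis using a ae
    by (metis cG g.inv_closed g.inv_inv g.inv_equality g.m_closed g.r_inv)
qed

lemma e_eq: "e1 = e2"
proof -
  have "cr e2 e1 = e2" using circ_e1 h.one_closed by simp
  moreover have "cr e2 e1 = e1" using h.l_one[of e1] g.one_closed by simp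
  ultimately show ?thesis by simp
qed

lemma key: "c \<in> A \<Longrightarrow> cr c (inv\<^bsub>G\<^esub> (inv\<^bsub>H\<^esub> c)) = dt c c"
proof -
  assume c: "c \<in> A"
  define cb where "cb = inv\<^bsub>H\<^esub> c"
  have cb: "cb \<in> A" "cr c cb = e1" using c e_eq unfolding cb_def by (auto simp: h.r_inv[simplified] h.inv_closed[simplified])
  have cbi: "inv\<^bsub>G\<^esub> cb \<in> A" using cb g.inv_closed by simp
  have "cr c (dt cb (inv\<^bsub>G\<^esub> cb)) = dt (dt (cr c cb) (inv\<^bsub>G\<^esub> c)) (cr c (inv\<^bsub>G\<^esub> cb))"
    using law[OF c cb(1) cbi] .
  moreover have "dt cb (inv\<^bsub>G\<^esub> cb) = e1" using g.r_inv[of cb] cb by simp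
  ultimately have "c = dt (inv\<^bsub>G\<^esub> c) (cr c (inv\<^bsub>G\<^esub> cb))"
    using circ_e1[OF c] cb c g.l_one by (simp add: g.inv_closed[simplified])
  hence "dt c c = dt c (dt (inv\<^bsub>G\<^esub> c) (cr c (inv\<^bsub>G\<^esub> cb)))" by simp
  also have "\<dots> = cr c (inv\<^bsub>G\<^esub> cb)" using c cbi
    by (metis cG g.inv_closed g.l_one g.m_assoc g.r_inv h.m_closed cH(1,2))
  finally show ?thesis unfolding cb_def by simp
qed


lemma cr_inv_l: "c \<in> A \<Longrightarrow> y \<in> A \<Longrightarrow> cr c (cr (inv\<^bsub>H\<^esub> c) y) = y"
  using h.m_assoc[of c "inv\<^bsub>H\<^esub> c" y] h.r_inv[of c] h.l_one[of y] h.inv_closed[of c] by simp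

lemma prod_sub:
  assumes X: "subgroup X K" and Y: "subgroup Y K" and KA: "carrier K = A" and gK: "group K"
  shows "set_prod (mult K) X Y \<subseteq> A"
proof
  fix x assume "x \<in> set_prod (mult K) X Y"
  then obtain b c where bc: "b \<in> X" "c \<in> Y" "x = mult K b c" unfolding set_prod_def by auto
  have "b \<in> carrier K" "c \<in> carrier K" using bc X Y subgroup.mem_carrier by fastforce+
  hence "mult K b c \<in> carrier K" using monoid.m_closed[OF group.is_monoid[OF gK]] by blast
  thus "x \<in> A" using bc KA by simp
qed

lemma part_a:
  assumes B: "sub_skew_brace B A dt e1 cr e2" and C: "sub_skew_brace C A dt e1 cr e2"
    and eq: "A = set_prod dt B C"
    and id: "left_ideal B A dt e1 cr \<or> left_ideal_op B A dt e1 cr"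
  shows "A = set_prod cr B C"
proof -
  have BG: "subgroup B G" and BH: "subgroup B H" and CG: "subgroup C G" and CH: "subgroup C H"
    using B C unfolding sub_skew_brace_def by auto
  have BA: "\<And>x. x \<in> B \<Longrightarrow> x \<in> A" using BG subgroup.mem_carrier by fastforce
  have CA: "\<And>x. x \<in> C \<Longrightarrow> x \<in> A" using CG subgroup.mem_carrier by fastforce
  have "A \<subseteq> set_prod cr C B"
  proof
    fix x assume x: "x \<in> A"
    show "x \<in> set_prod cr C B"
    proof (cases "left_ideal B A dt e1 cr")
      case True
      have "A = set_prod dt C B" using swap_dot[OF gG BG CG eq] .
      then obtain c b2 where cb: "c \<in> C" "b2 \<in> B" "x = dt c b2" using x unfolding set_prod_def by auto
      have c: "c \<in> A" and b2: "b2 \<in> A" using cb BA CA by auto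
      define d where "d = inv\<^bsub>H\<^esub> c"
      have d: "d \<in> A" unfolding d_def using c h.inv_closed by simp
      have di: "inv\<^bsub>G\<^esub> d \<in> A" using d g.inv_closed by simp
      have db: "cr d b2 \<in> A" using d b2 h.m_closed by simp
      define b where "b = lam A dt e1 cr d b2"
      have bB: "b \<in> B" using True d cb(2) unfolding left_ideal_def b_def by auto
      have "cr c b = dt (dt (cr c (inv\<^bsub>G\<^esub> d)) (inv\<^bsub>G\<^esub> c)) (cr c (cr d b2))"
        unfolding b_def lam_def using law[OF c di db] .
      also have "\<dots> = dt (dt (dt c c) (inv\<^bsub>G\<^esub> c)) b2"
        using key[OF c] cr_inv_l[OF c b2] unfolding d_def by simp
      also have "\<dots> = x" using cb(3) c b2 g.g3[of c b2] by simp
      finally show ?thesis unfolding set_prod_def using cb(1) bB by auto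
    next
      case False
      hence op: "left_ideal_op B A dt e1 cr" using id by simp
      obtain b c where cb: "b \<in> B" "c \<in> C" "x = dt b c" using x eq unfolding set_prod_def by auto
      have c: "c \<in> A" and b: "b \<in> A" using cb BA CA by auto
      define d where "d = inv\<^bsub>H\<^esub> c"
      have d: "d \<in> A" unfolding d_def using c h.inv_closed by simp
      have di: "inv\<^bsub>G\<^esub> d \<in> A" using d g.inv_closed by simp
      have db: "cr d b \<in> A" using d b h.m_closed by simp
      define b' where "b' = lam_op A dt e1 cr d b"
      have bB: "b' \<in> B" using op d cb(1) unfolding left_ideal_op_def b'_def by auto
      have "cr c b' = dt (dt (cr c (cr d b)) (inv\<^bsub>G\<^esub> c)) (cr c (inv\<^bsub>G\<^esub> d))"
        unfolding b'_def lam_op_def using law[OF c db di] .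
      also have "\<dots> = dt (dt b (inv\<^bsub>G\<^esub> c)) (dt c c)"
        using key[OF c] cr_inv_l[OF c b] unfolding d_def by simp
      also have "\<dots> = x" using cb(3) c b g.g4[of c b] by simp
      finally show ?thesis unfolding set_prod_def using cb(2) bB by auto
    qed
  qed
  moreover have "set_prod cr C B \<subseteq> A" using prod_sub[OF CH BH] gH by simp
  ultimately have "A = set_prod cr C B" by auto
  thus ?thesis using swap_dot[OF gH CH BH] by simp
qed

lemma part_b:
  assumes B: "sub_skew_brace B A dt e1 cr e2" and C: "sub_skew_brace C A dt e1 cr e2"
    and eq: "A = set_prod cr B C"
    and id: "right_ideal B A dt e1 cr \<or> right_ideal_op B A dt e1 cr"
  shows "A = set_prod dt B C"
proof -
  have BG: "subgroup B G" and BH: "subgroup B H" and CG: "subgroup C G" and CH: "subgroup C H"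
    using B C unfolding sub_skew_brace_def by auto
  have BA: "\<And>x. x \<in> B \<Longrightarrow> x \<in> A" using BG subgroup.mem_carrier by fastforce
  have CA: "\<And>x. x \<in> C \<Longrightarrow> x \<in> A" using CG subgroup.mem_carrier by fastforce
  have sub1: "set_prod dt B C \<subseteq> A" using prod_sub[OF BG CG] gG by simp
  show ?thesis
  proof (cases "right_ideal B A dt e1 cr")
    case True
    have "A \<subseteq> set_prod dt B C"
    proof
      fix x assume x: "x \<in> A"
      obtain b c where cb: "b \<in> B" "c \<in> C" "x = cr b c" using x eq unfolding set_prod_def by auto
      have c: "c \<in> A" and b: "b \<in> A" using cb BA CA by auto
      have bc: "cr b c \<in> A" using b c h.m_closed by simp
      have t: "dt (lam A dt e1 cr b c) (inv\<^bsub>G\<^esub> c) \<in> B" using True cb c unfolding right_ideal_def by auto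
      define b' where "b' = dt b (dt (lam A dt e1 cr b c) (inv\<^bsub>G\<^esub> c))"
      have b'B: "b' \<in> B" unfolding b'_def using subgroup.m_closed[OF BG cb(1) t] by simp
      have "dt b' c = x" unfolding b'_def lam_def using cb(3) b c bc g.g1[of b "cr b c" c] by simp
      thus "x \<in> set_prod dt B C" unfolding set_prod_def using b'B cb(2) by force
    qed
    thus ?thesis using sub1 by auto
  next
    case False
    hence op: "right_ideal_op B A dt e1 cr" using id by simp
    have "A \<subseteq> set_prod dt C B"
    proof
      fix x assume x: "x \<in> A"
      obtain b c where cb: "b \<in> B" "c \<in> C" "x = cr b c" using x eq unfolding set_prod_def by auto
      have c: "c \<in> A" and b: "b \<in> A" using cb BA CA by auto
      have bc: "cr b c \<in> A" using b c h.m_closed by simp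
      have t: "dt (inv\<^bsub>G\<^esub> c) (lam_op A dt e1 cr b c) \<in> B" using op cb c unfolding right_ideal_op_def by auto
      define b' where "b' = dt (dt (inv\<^bsub>G\<^esub> c) (lam_op A dt e1 cr b c)) b"
      have b'B: "b' \<in> B" unfolding b'_def using subgroup.m_closed[OF BG t cb(1)] by simp
      have "dt c b' = x" unfolding b'_def lam_op_def using cb(3) b c bc g.g2[of b "cr b c" c] by simp
      thus "x \<in> set_prod dt C B" unfolding set_prod_def using b'B cb(2) by force
    qed
    moreover have "set_prod dt C B \<subseteq> A" using prod_sub[OF CG BG] gG by simp
    ultimately have "A = set_prod dt C B" by auto
    thus ?thesis using swap_dot[OF gG CG BG] by simp
  qed
qed

end

theorem lemma2p7:
  assumes "skew_brace A dt e1 cr e2"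
    and "sub_skew_brace B A dt e1 cr e2"
    and "sub_skew_brace C A dt e1 cr e2"
  shows "(A = set_prod dt B C \<and>
           (left_ideal B A dt e1 cr \<or> left_ideal_op B A dt e1 cr)
             \<longrightarrow> A = set_prod cr B C)
       \<and> (A = set_prod cr B C \<and>
           (right_ideal B A dt e1 cr \<or> right_ideal_op B A dt e1 cr)
             \<longrightarrow> A = set_prod dt B C)"
proof -
  interpret sb A dt e1 cr e2 by (unfold_locales, rule assms(1))
  show ?thesis using part_a[OF assms(2,3)] part_b[OF assms(2,3)] by blast
qed

end
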